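(* Consider the setting in the context. For integers $m\ge1$ and $T>m$, define the event $$\mathcal E_2=\Big\{\frac1m\sum_{s=1}^m z_{km+s}z_{km+s}^\top\succeq a_1^2I_{n_z}\ \text{ for all } 0\le k\le\lceil T/m\rceil-1\Big\}.$$ Then $$\mathbb P(\mathcal E_2^c)\le 544\,\frac{T}{m}\,n_z^{2.5}\log(a_2n_z)\,a_2^{n_z}\exp(-a_3m).$$
   Context: Unknown linear system $x_{t+1}=A^*x_t+B^*u_t+w_t$ with $x_t\in\mathbb R^{n_x}$, $u_t\in\mathbb R^{n_u}$; $n_z=n_x+n_u$, $z_t=(x_t^\top,u_t^\top)^\top$. Assumption A2: with $\mathcal F_t=\sigma(w_0,\dots,w_{t-1},z_0,\dots,z_t)$, $(z_t)$ is adapted and for some $\sigma_z>0$, $p_z\in(0,1]$: for every unit $\lambda\in\mathbb R^{n_z}$ and every $t\ge0$, $\mathbb P(|\lambda^\top z_{t+1}|\ge\sigma_z\mid\mathcal F_t)\ge p_z$ a.s.; and there is $b_z\ge0$ with $\|z_t\|_2\le b_z$ a.s. for all $t$. (Also standing: $\|w_t\|_\infty\le w_{\max}$, $w_t$ i.i.d., zero mean, positive definite covariance.) Constants: $a_1=\sigma_zp_z/4$, $a_2=64b_z^2/(\sigma_z^2p_z^2)$, $a_3=p_z^2/8$. $A\succeq B$ means $A-B$ is positive semidefinite. *)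

theory Defs
  imports "HOL-Probability.Probability"
begin

text \<open>Stacked vector z = (x, u) indexed by the disjoint sum of the index types,
  so that n_z = CARD('nx + 'nu) = n_x + n_u.\<close>
definition stack :: "real^'nx \<Rightarrow> real^'nu \<Rightarrow> real^('nx + 'nu)" where
  "stack x u = (\<chi> i. case i of Inl a \<Rightarrow> x $ a | Inr b \<Rightarrow> u $ b)"

definition outer :: "real^'n \<Rightarrow> real^'n^'n" where
  "outer v = (\<chi> i j. v $ i * v $ j)"

definition psd :: "real^'n^'n \<Rightarrow> bool" where
  "psd A \<longleftrightarrow> (\<forall>v. 0 \<le> v \<bullet> (A *v v))"

definition pos_def :: "real^'n^'n \<Rightarrow> bool" where
  "pos_def A \<longleftrightarrow> (\<forall>v. v \<noteq> 0 \<longrightarrow> 0 < v \<bullet> (A *v v))"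

definition loewner_ge :: "real^'n^'n \<Rightarrow> real^'n^'n \<Rightarrow> bool" where
  "loewner_ge A B \<longleftrightarrow> psd (A - B)"

definition filt :: "'a measure \<Rightarrow> (nat \<Rightarrow> 'a \<Rightarrow> real^'nx) \<Rightarrow> (nat \<Rightarrow> 'a \<Rightarrow> real^'nz)
    \<Rightarrow> nat \<Rightarrow> 'a measure" where
  "filt M w z t = sigma (space M)
     ({w s -` B \<inter> space M | s B. s < t \<and> B \<in> sets borel} \<union>
      {z s -` B \<inter> space M | s B. s \<le> t \<and> B \<in> sets borel})"

definition const_a1 :: "real \<Rightarrow> real \<Rightarrow> real" where
  "const_a1 \<sigma>z pz = \<sigma>z * pz / 4"
definition const_a2 :: "real \<Rightarrow> real \<Rightarrow> real \<Rightarrow> real" where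
  "const_a2 \<sigma>z pz bz = 64 * bz^2 / (\<sigma>z^2 * pz^2)"
definition const_a3 :: "real \<Rightarrow> real" where
  "const_a3 pz = pz^2 / 8"

end

theory Submission
  imports Defs
begin
lemma stack_measurable[measurable]:
  fixes f :: "'a \<Rightarrow> real^'nx" and g :: "'a \<Rightarrow> real^'nu"
  assumes f[measurable]: "f \<in> borel_measurable M" and g[measurable]: "g \<in> borel_measurable M"
  shows "(\<lambda>\<omega>. stack (f \<omega>) (g \<omega>)) \<in> borel_measurable M"
proof (subst borel_measurable_euclidean_space, intro ballI)
  fix i :: "real^('nx+'nu)" assume "i \<in> Basis"
  then obtain j where j: "i = axis j 1" using axis_inverse by blast
  show "(\<lambda>\<omega>. stack (f \<omega>) (g \<omega>) \<bullet> i) \<in> borel_measurable M"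
  proof (cases j)
    case (Inl a)
    have "(\<lambda>\<omega>. stack (f \<omega>) (g \<omega>) \<bullet> i) = (\<lambda>\<omega>. f \<omega> \<bullet> axis a 1)"
      by (auto simp: j Inl stack_def inner_axis)
    then show ?thesis by simp
  next
    case (Inr a)
    have "(\<lambda>\<omega>. stack (f \<omega>) (g \<omega>) \<bullet> i) = (\<lambda>\<omega>. g \<omega> \<bullet> axis a 1)"
      by (auto simp: j Inr stack_def inner_axis)
    then show ?thesis by simp
  qed
qed

lemma filt_space[simp]: "space (filt M w z t) = space M"
  unfolding filt_def by (simp add: space_measure_of_conv)

lemma filt_sets_eq: "sets (filt M w z t) = sigma_sets (space M)
     ({w s -` B \<inter> space M | s B. s < t \<and> B \<in> sets borel} \<union>
      {z s -` B \<inter> space M | s B. s \<le> t \<and> B \<in> sets borel})"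
  unfolding filt_def by (rule sets_measure_of) auto

lemma filt_sets:
  assumes "\<And>s. w s \<in> borel_measurable M" "\<And>s. z s \<in> borel_measurable M"
  shows "sets (filt M w z t) \<subseteq> sets M"
  unfolding filt_sets_eq
  by (rule sets.sigma_sets_subset) (auto intro: measurable_sets assms)

lemma filt_z_meas:
  assumes "s \<le> t"
  shows "z s \<in> borel_measurable (filt M w z t)"
proof (rule measurableI)
  fix B :: "(real^'b) set" assume "B \<in> sets borel"
  then show "z s -` B \<inter> space (filt M w z t) \<in> sets (filt M w z t)"
    unfolding filt_sets_eq filt_space using assms by (intro sigma_sets.Basic) blast
qed auto

lemma filt_subalg:
  assumes "prob_space M" "\<And>s. w s \<in> borel_measurable M" "\<And>s. z s \<in> borel_measurable M"
  shows "sigma_finite_subalgebra M (filt M w z t)"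
proof -
  interpret prob_space M by fact
  have "finite_measure_subalgebra M (filt M w z t)"
    by unfold_locales (use filt_sets[OF assms(2,3)] in \<open>auto simp: subalgebra_def\<close>)
  then show ?thesis using finite_measure_subalgebra_is_sigma_finite by blast
qed


lemma vec_nth_meas[measurable]:
  fixes f :: "'a \<Rightarrow> real^'n"
  assumes [measurable]: "f \<in> borel_measurable M"
  shows "(\<lambda>\<omega>. f \<omega> $ i) \<in> borel_measurable M"
proof -
  have "(\<lambda>\<omega>. f \<omega> $ i) = (\<lambda>\<omega>. f \<omega> \<bullet> axis i 1)" by (simp add: inner_axis)
  then show ?thesis by simp
qed

locale blk =
  fixes M :: "'a measure" and z :: "nat \<Rightarrow> 'a \<Rightarrow> real^'n" and w :: "nat \<Rightarrow> 'a \<Rightarrow> real^'m"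
    and \<sigma> p :: real
  assumes M: "prob_space M" and zm[measurable]: "\<And>t. z t \<in> borel_measurable M"
    and wm[measurable]: "\<And>t. w t \<in> borel_measurable M"
    and exc: "\<And>l t. norm (l :: real^'n) = 1 \<Longrightarrow>
        AE \<omega> in M. real_cond_exp M (filt M w z t)
          (indicator {\<omega>' \<in> space M. \<bar>l \<bullet> z (Suc t) \<omega>'\<bar> \<ge> \<sigma>}) \<omega> \<ge> p"
begin

lemma cond_step:
  fixes P :: "'a \<Rightarrow> real"
  assumes l: "norm l = 1" and PF: "P \<in> borel_measurable (filt M w z t)"
    and P0: "\<And>\<omega>. 0 \<le> P \<omega>" and P1: "\<And>\<omega>. P \<omega> \<le> 1"
  shows "p * (\<integral>\<omega>. P \<omega> \<partial>M) \<le> (\<integral>\<omega>. P \<omega> * indicator {\<omega>' \<in> space M. \<bar>l \<bullet> z (Suc t) \<omega>'\<bar> \<ge> \<sigma>} \<omega> \<partial>M)"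
proof -
  interpret prob_space M by (rule M)
  interpret F: sigma_finite_subalgebra M "filt M w z t" by (rule filt_subalg[OF M wm zm])
  define S where "S = {\<omega>' \<in> space M. \<bar>l \<bullet> z (Suc t) \<omega>'\<bar> \<ge> \<sigma>}"
  have PM[measurable]: "P \<in> borel_measurable M" using measurable_from_subalg[OF F.subalg PF] .
  have S[measurable]: "S \<in> sets M" unfolding S_def by measurable
  have intPS: "integrable M (\<lambda>\<omega>. P \<omega> * indicator S \<omega>)"
    by (rule integrable_const_bound[where B=1]) (auto simp: P0 P1 indicator_def abs_le_iff intro: order_trans[OF _ P1])
  have intP: "integrable M P"
    by (rule integrable_const_bound[where B=1]) (auto simp: P0 P1 abs_le_iff intro: order_trans[OF _ P1])
  have ind_meas: "indicator S \<in> borel_measurable M" by measurable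
  note ce = F.real_cond_exp_intg[OF intPS PF ind_meas]
  have "(\<integral>\<omega>. p * P \<omega> \<partial>M) \<le> (\<integral>\<omega>. P \<omega> * real_cond_exp M (filt M w z t) (indicator S) \<omega> \<partial>M)"
  proof (rule integral_mono_AE)
    show "integrable M (\<lambda>\<omega>. p * P \<omega>)" using intP by simp
    show "integrable M (\<lambda>\<omega>. P \<omega> * real_cond_exp M (filt M w z t) (indicator S) \<omega>)" by (rule ce(1))
    show "AE \<omega> in M. p * P \<omega> \<le> P \<omega> * real_cond_exp M (filt M w z t) (indicator S) \<omega>"
      using exc[OF l, of t] unfolding S_def[symmetric]
      by eventually_elim (metis P0 mult.commute mult_right_mono)
  qed
  then show ?thesis using ce(2) unfolding S_def[symmetric] by simp
qed

definition Yi :: "real^'n \<Rightarrow> nat \<Rightarrow> 'a \<Rightarrow> real" where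
  "Yi l t = indicator {\<omega>' \<in> space M. \<bar>l \<bullet> z (Suc t) \<omega>'\<bar> \<ge> \<sigma>}"

lemma Yi_meas_filt:
  assumes "Suc t \<le> t'"
  shows "Yi l t \<in> borel_measurable (filt M w z t')"
proof -
  have zF[measurable]: "z (Suc t) \<in> borel_measurable (filt M w z t')" by (rule filt_z_meas[OF assms])
  have "{\<omega>' \<in> space (filt M w z t'). \<bar>l \<bullet> z (Suc t) \<omega>'\<bar> \<ge> \<sigma>} \<in> sets (filt M w z t')" by measurable
  then show ?thesis unfolding Yi_def filt_space by measurable
qed

lemma Yi_meas[measurable]: "Yi l t \<in> borel_measurable M"
  unfolding Yi_def by measurable

lemma Yi01: "Yi l t \<omega> = 0 \<or> Yi l t \<omega> = 1"
  unfolding Yi_def by (simp add: indicator_def)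

lemma block_bound:
  assumes l: "norm l = 1" and p1: "p \<le> 1"
  shows "(\<integral>\<omega>. (\<Prod>s<j. exp (- Yi l (t0 + s) \<omega>)) \<partial>M) \<le> (1 - (1 - exp (-1)) * p) ^ j"
proof (induction j)
  case 0
  interpret prob_space M by (rule M)
  show ?case by simp
next
  case (Suc j)
  interpret prob_space M by (rule M)
  define c where "c = 1 - exp (-1::real)"
  have c0: "0 \<le> c" "c \<le> 1" unfolding c_def by auto
  have cp1: "c * p \<le> 1"
  proof (cases "0 \<le> p")
    case True then show ?thesis using c0 p1 mult_le_one by blast
  next
    case False then show ?thesis using c0 mult_nonneg_nonpos[of c p] by linarith
  qed
  define P where "P = (\<lambda>\<omega>. \<Prod>s<j. exp (- Yi l (t0 + s) \<omega>))"
  have PF: "P \<in> borel_measurable (filt M w z (t0 + j))"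
  proof -
    have *: "(\<lambda>\<omega>. exp (- Yi l (t0 + s) \<omega>)) \<in> borel_measurable (filt M w z (t0 + j))" if "s < j" for s
    proof -
      have [measurable]: "Yi l (t0 + s) \<in> borel_measurable (filt M w z (t0 + j))"
        by (rule Yi_meas_filt) (use that in simp)
      show ?thesis by measurable
    qed
    show ?thesis unfolding P_def by (rule borel_measurable_prod) (use * in auto)
  qed
  have PM[measurable]: "P \<in> borel_measurable M" unfolding P_def by measurable
  have P0: "0 \<le> P \<omega>" for \<omega> unfolding P_def by (intro prod_nonneg) auto
  have P1: "P \<omega> \<le> 1" for \<omega> unfolding P_def
    by (intro prod_le_1) (auto, metis Yi01 exp_zero less_eq_real_def exp_less_one_iff neg_less_0_iff_less zero_less_one order_refl)
  have intP: "integrable M P"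
    by (rule integrable_const_bound[where B=1]) (auto simp: P0 P1 abs_le_iff intro: order_trans[OF _ P1])
  have intPY: "integrable M (\<lambda>\<omega>. P \<omega> * Yi l (t0 + j) \<omega>)"
    by (rule integrable_const_bound[where B=1]) (auto simp: P0 P1 abs_le_iff Yi_def indicator_def intro: order_trans[OF _ P1])
  have ex: "exp (- Yi l (t0 + j) \<omega>) = 1 - c * Yi l (t0 + j) \<omega>" for \<omega>
    using Yi01[of l "t0 + j" \<omega>] unfolding c_def by auto
  have "(\<Prod>s<Suc j. exp (- Yi l (t0 + s) \<omega>)) = P \<omega> - c * (P \<omega> * Yi l (t0 + j) \<omega>)" for \<omega>
    unfolding P_def prod.lessThan_Suc ex by (simp add: algebra_simps)
  then have "(\<integral>\<omega>. (\<Prod>s<Suc j. exp (- Yi l (t0 + s) \<omega>)) \<partial>M) = (\<integral>\<omega>. P \<omega> \<partial>M) - c * (\<integral>\<omega>. P \<omega> * Yi l (t0 + j) \<omega> \<partial>M)"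
    using intP intPY by simp
  also have "\<dots> \<le> (\<integral>\<omega>. P \<omega> \<partial>M) - c * (p * (\<integral>\<omega>. P \<omega> \<partial>M))"
    using cond_step[OF l PF P0 P1] c0 unfolding Yi_def by (intro diff_left_mono mult_left_mono) auto
  also have "\<dots> = (1 - c * p) * (\<integral>\<omega>. P \<omega> \<partial>M)" by (simp add: algebra_simps)
  also have "\<dots> \<le> (1 - c * p) * (1 - c * p) ^ j"
    using Suc.IH cp1 unfolding P_def c_def[symmetric]
    by (intro mult_left_mono) auto
  finally show ?case by (simp add: c_def)
qed


lemma bad_bound:
  assumes l: "norm l = 1" and p0: "0 \<le> p" and p1: "p \<le> 1"
  shows "measure M {\<omega>\<in>space M. (\<Sum>s<m. Yi l (t0 + s) \<omega>) < p * real m / 4} \<le> exp (- p * real m / 8)"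
proof -
  interpret prob_space M by (rule M)
  define c where "c = 1 - exp (-1::real)"
  have e1: "exp (-1::real) \<le> 5/8"
  proof -
    have "2 \<le> exp (1::real)" using exp_ge_add_one_self[of "1::real"] by simp
    then show ?thesis by (simp add: exp_minus field_simps)
  qed
  have c38: "3/8 \<le> c" using e1 unfolding c_def by simp
  have c1: "c \<le> 1" unfolding c_def by simp
  define U where "U = (\<lambda>\<omega>. \<Prod>s<m. exp (- Yi l (t0 + s) \<omega>))"
  have UM[measurable]: "U \<in> borel_measurable M" unfolding U_def by measurable
  have U0: "0 \<le> U \<omega>" for \<omega> unfolding U_def by (intro prod_nonneg) auto
  have U_eq: "U \<omega> = exp (- (\<Sum>s<m. Yi l (t0 + s) \<omega>))" for \<omega>
    unfolding U_def by (simp add: exp_sum sum_negf[symmetric])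
  have U1: "U \<omega> \<le> 1" for \<omega>
  proof -
    have "0 \<le> (\<Sum>s<m. Yi l (t0 + s) \<omega>)" by (intro sum_nonneg) (auto simp: Yi_def)
    then show ?thesis unfolding U_eq by simp
  qed
  have intU: "integrable M U"
    by (rule integrable_const_bound[where B=1]) (auto simp: U0 U1 abs_le_iff intro: order_trans[OF _ U1])
  have "measure M {\<omega>\<in>space M. (\<Sum>s<m. Yi l (t0 + s) \<omega>) < p * real m / 4}
      \<le> measure M {\<omega>\<in>space M. U \<omega> \<ge> exp (- p * real m / 4)}"
    by (rule finite_measure_mono) (auto simp: U_eq)
  also have "\<dots> \<le> (\<integral>\<omega>. U \<omega> \<partial>M) / exp (- p * real m / 4)"
    by (rule integral_Markov_inequality_measure[OF intU sets.top]) (auto simp: U0)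
  also have "\<dots> \<le> (1 - c * p) ^ m / exp (- p * real m / 4)"
    using block_bound[OF l p1, of t0 m] unfolding U_def c_def by (intro divide_right_mono) auto
  also have "\<dots> = (1 - c * p) ^ m * exp (p * real m / 4)"
    by (simp add: exp_minus field_simps)
  also have "\<dots> \<le> exp (- c * p) ^ m * exp (p * real m / 4)"
  proof -
    have "0 \<le> 1 - c * p" using c1 p0 p1 mult_le_one[of c p] c38 by linarith
    moreover have "1 - c * p \<le> exp (- c * p)" using exp_ge_add_one_self[of "- c * p"] by simp
    ultimately show ?thesis by (intro mult_right_mono power_mono) auto
  qed
  also have "\<dots> = exp (- c * p * real m + p * real m / 4)"
    by (simp only: exp_of_nat_mult[symmetric] exp_add[symmetric]) (simp add: algebra_simps)
  also have "\<dots> \<le> exp (- p * real m / 8)"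
  proof -
    have "0 \<le> p * real m" using p0 by simp
    then have "(3/8) * (p * real m) \<le> c * (p * real m)" using c38 by (intro mult_right_mono) auto
    then show ?thesis by simp
  qed
  finally show ?thesis .
qed

lemma coverage:
  assumes \<sigma>0: "\<sigma> > 0" and bd: "AE \<omega> in M. norm (z (Suc 0) \<omega>) \<le> bz"
  shows "real CARD('n) * \<sigma>\<^sup>2 * p \<le> bz\<^sup>2"
proof -
  interpret prob_space M by (rule M)
  interpret F: sigma_finite_subalgebra M "filt M w z 0" by (rule filt_subalg[OF M wm zm])
  have sq_int: "integrable M (\<lambda>\<omega>. (z (Suc 0) \<omega> $ i)\<^sup>2)" for i
  proof (rule integrable_const_bound[where B="bz\<^sup>2"])
    show "AE \<omega> in M. norm ((z (Suc 0) \<omega> $ i)\<^sup>2) \<le> bz\<^sup>2"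
      using bd
    proof eventually_elim
      case (elim \<omega>)
      have zi: "\<bar>z (Suc 0) \<omega> $ i\<bar> \<le> bz" using component_le_norm_cart[of "z (Suc 0) \<omega>" i] elim by linarith
      show ?case using power_mono[OF zi abs_ge_zero, of 2] by simp
    qed
  qed measurable
  have step: "\<sigma>\<^sup>2 * p \<le> (\<integral>\<omega>. (z (Suc 0) \<omega> $ i)\<^sup>2 \<partial>M)" for i
  proof -
    define S where "S = {\<omega>' \<in> space M. \<bar>axis i 1 \<bullet> z (Suc 0) \<omega>'\<bar> \<ge> \<sigma>}"
    have S[measurable]: "S \<in> sets M" unfolding S_def by measurable
    have intS: "integrable M (indicator S :: 'a \<Rightarrow> real)"
      by (rule integrable_const_bound[where B=1]) (auto simp: indicator_def)
    have "p = (\<integral>\<omega>. p \<partial>M)" by (simp add: prob_space.prob_space[OF M])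
    also have "\<dots> \<le> (\<integral>\<omega>. real_cond_exp M (filt M w z 0) (indicator S) \<omega> \<partial>M)"
      by (rule integral_mono_AE) (use F.real_cond_exp_int(1)[OF intS] exc[of "axis i 1" 0] in \<open>auto simp: S_def\<close>)
    also have "\<dots> = (\<integral>\<omega>. indicator S \<omega> \<partial>M)" by (rule F.real_cond_exp_int(2)[OF intS])
    finally have pS: "p \<le> (\<integral>\<omega>. indicator S \<omega> \<partial>M)" .
    have "\<sigma>\<^sup>2 * p \<le> \<sigma>\<^sup>2 * (\<integral>\<omega>. indicator S \<omega> \<partial>M)" using pS by (intro mult_left_mono) auto
    also have "\<dots> = (\<integral>\<omega>. \<sigma>\<^sup>2 * indicator S \<omega> \<partial>M)" by simp
    also have "\<dots> \<le> (\<integral>\<omega>. (z (Suc 0) \<omega> $ i)\<^sup>2 \<partial>M)"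
    proof (rule integral_mono)
      show "integrable M (\<lambda>\<omega>. \<sigma>\<^sup>2 * indicator S \<omega>)" using intS by simp
      show "integrable M (\<lambda>\<omega>. (z (Suc 0) \<omega> $ i)\<^sup>2)" by (rule sq_int)
      fix \<omega> show "\<sigma>\<^sup>2 * indicator S \<omega> \<le> (z (Suc 0) \<omega> $ i)\<^sup>2"
      proof (cases "\<omega> \<in> S")
        case True
        then have "\<sigma> \<le> \<bar>z (Suc 0) \<omega> $ i\<bar>" by (simp add: S_def inner_axis')
        then have "\<sigma>\<^sup>2 \<le> \<bar>z (Suc 0) \<omega> $ i\<bar>\<^sup>2" using \<sigma>0 by (intro power_mono) auto
        then show ?thesis using True by simp
      qed simp
    qed
    finally show ?thesis .
  qed
  have nsq: "(norm v)\<^sup>2 = (\<Sum>i\<in>UNIV. (v $ i)\<^sup>2)" for v :: "real^'n"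
    by (simp add: norm_vec_def L2_set_def sum_nonneg)
  have "real CARD('n) * \<sigma>\<^sup>2 * p = (\<Sum>i\<in>(UNIV::'n set). \<sigma>\<^sup>2 * p)" by simp
  also have "\<dots> \<le> (\<Sum>i\<in>UNIV. (\<integral>\<omega>. (z (Suc 0) \<omega> $ i)\<^sup>2 \<partial>M))" by (intro sum_mono step)
  also have "\<dots> = (\<integral>\<omega>. (\<Sum>i\<in>UNIV. (z (Suc 0) \<omega> $ i)\<^sup>2) \<partial>M)"
    by (rule Bochner_Integration.integral_sum[symmetric]) (use sq_int in auto)
  also have "\<dots> = (\<integral>\<omega>. (norm (z (Suc 0) \<omega>))\<^sup>2 \<partial>M)" by (simp add: nsq)
  also have "\<dots> \<le> (\<integral>\<omega>. bz\<^sup>2 \<partial>M)"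
  proof (rule integral_mono_AE)
    show "integrable M (\<lambda>\<omega>. (norm (z (Suc 0) \<omega>))\<^sup>2)"
      unfolding nsq by (intro Bochner_Integration.integrable_sum sq_int)
    show "AE \<omega> in M. (norm (z (Suc 0) \<omega>))\<^sup>2 \<le> bz\<^sup>2"
      using bd by eventually_elim (simp add: power_mono)
  qed simp
  also have "\<dots> = bz\<^sup>2" by (simp add: prob_space.prob_space[OF M])
  finally show ?thesis .
qed

end

lemma outer_mv: "outer a *v v = (a \<bullet> v) *\<^sub>R a"
  by (simp add: outer_def matrix_vector_mult_def vec_eq_iff inner_vec_def sum_distrib_left mult_ac)

lemma mv_sum: "finite A \<Longrightarrow> (\<Sum>s\<in>A. F s) *v v = (\<Sum>s\<in>A. F s *v v)"
  for F :: "nat \<Rightarrow> real^'n^'k"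
  by (induct rule: finite_induct) (auto simp: matrix_vector_mult_add_rdistrib)

lemma quad_form:
  fixes f :: "nat \<Rightarrow> real^'n"
  assumes "finite A"
  shows "v \<bullet> ((c *\<^sub>R (\<Sum>s\<in>A. outer (f s))) *v v) = c * (\<Sum>s\<in>A. (f s \<bullet> v)\<^sup>2)"
proof -
  have "(c *\<^sub>R (\<Sum>s\<in>A. outer (f s))) *v v = c *\<^sub>R (\<Sum>s\<in>A. (f s \<bullet> v) *\<^sub>R f s)"
    by (simp add: scaleR_matrix_vector_assoc[symmetric] mv_sum[OF assms] outer_mv)
  then show ?thesis
    by (simp add: inner_sum_right power2_eq_square inner_commute)
qed

lemma loewner_I:
  fixes S :: "real^'n^'n"
  assumes "\<And>v. c * (v \<bullet> v) \<le> v \<bullet> (S *v v)"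
  shows "loewner_ge S (c *\<^sub>R mat 1)"
  unfolding loewner_ge_def psd_def
proof
  fix v :: "real^'n"
  have "(S - c *\<^sub>R mat 1) *v v = S *v v - c *\<^sub>R v"
    by (simp add: matrix_vector_mult_diff_rdistrib scaleR_matrix_vector_assoc[symmetric])
  then show "0 \<le> v \<bullet> ((S - c *\<^sub>R mat 1) *v v)" using assms[of v] by (simp add: inner_diff_right)
qed

lemma det_block:
  fixes f :: "nat \<Rightarrow> real^'n"
  assumes m: "m \<ge> 1" and bd: "\<And>s. s \<in> {1..m} \<Longrightarrow> norm (f s) \<le> bz"
    and \<sigma>0: "\<sigma> > 0" and bz0: "bz > 0" and p0: "0 \<le> p" and p1: "p \<le> 1"
    and net: "\<And>v. norm v = 1 \<Longrightarrow> \<exists>l. norm l = 1 \<and> norm (v - l) \<le> \<sigma> / (2 * bz) \<and>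
                 p * real m / 4 \<le> (\<Sum>s\<in>{1..m}. if \<sigma> \<le> \<bar>l \<bullet> f s\<bar> then 1 else 0)"
  shows "loewner_ge ((1 / real m) *\<^sub>R (\<Sum>s = 1..m. outer (f s))) ((\<sigma> * p / 4)\<^sup>2 *\<^sub>R mat 1)"
proof (rule loewner_I)
  have unit: "(\<sigma> * p / 4)\<^sup>2 \<le> (1 / real m) * (\<Sum>s\<in>{1..m}. (f s \<bullet> u)\<^sup>2)" if u: "norm u = 1" for u
  proof -
    obtain l where l: "norm l = 1" "norm (u - l) \<le> \<sigma> / (2 * bz)"
      and cnt: "p * real m / 4 \<le> (\<Sum>s\<in>{1..m}. if \<sigma> \<le> \<bar>l \<bullet> f s\<bar> then 1 else 0)"
      using net[OF u] by blast
    have each: "(if \<sigma> \<le> \<bar>l \<bullet> f s\<bar> then \<sigma>\<^sup>2 / 4 else 0) \<le> (f s \<bullet> u)\<^sup>2" if s: "s \<in> {1..m}" for s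
    proof (cases "\<sigma> \<le> \<bar>l \<bullet> f s\<bar>")
      case True
      have "\<bar>f s \<bullet> (u - l)\<bar> \<le> norm (f s) * norm (u - l)" by (rule Cauchy_Schwarz_ineq2)
      also have "\<dots> \<le> bz * (\<sigma> / (2 * bz))" using bd[OF s] l(2) bz0 by (intro mult_mono) auto
      also have "\<dots> = \<sigma> / 2" using bz0 by simp
      finally have "\<bar>f s \<bullet> (u - l)\<bar> \<le> \<sigma> / 2" .
      moreover have "\<sigma> \<le> \<bar>f s \<bullet> l\<bar>" using True by (simp add: inner_commute)
      moreover have "\<bar>f s \<bullet> l\<bar> \<le> \<bar>f s \<bullet> u\<bar> + \<bar>f s \<bullet> (u - l)\<bar>"
      proof -
        have "f s \<bullet> l = f s \<bullet> u - f s \<bullet> (u - l)" by (simp add: inner_diff_right)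
        then show ?thesis using abs_triangle_ineq4[of "f s \<bullet> u" "f s \<bullet> (u - l)"] by simp
      qed
      ultimately have "\<sigma> / 2 \<le> \<bar>f s \<bullet> u\<bar>" by linarith
      then have "(\<sigma> / 2)\<^sup>2 \<le> \<bar>f s \<bullet> u\<bar>\<^sup>2" using \<sigma>0 by (intro power_mono) auto
      then show ?thesis using True by (simp add: power_divide)
    qed simp
    have "(\<sigma> * p / 4)\<^sup>2 \<le> \<sigma>\<^sup>2 * p / 16"
    proof -
      have "p\<^sup>2 \<le> p" using p0 p1 by (simp add: power2_eq_square mult_le_one mult_left_le)
      then have "\<sigma>\<^sup>2 * p\<^sup>2 \<le> \<sigma>\<^sup>2 * p" by (intro mult_left_mono) auto
      then show ?thesis by (simp add: power_mult_distrib power_divide)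
    qed
    also have "\<dots> = (1 / real m) * ((\<sigma>\<^sup>2 / 4) * (p * real m / 4))" using m by simp
    also have "\<dots> \<le> (1 / real m) * ((\<sigma>\<^sup>2 / 4) * (\<Sum>s\<in>{1..m}. if \<sigma> \<le> \<bar>l \<bullet> f s\<bar> then 1 else 0))"
      using cnt by (intro mult_left_mono) auto
    also have "\<dots> = (1 / real m) * (\<Sum>s\<in>{1..m}. if \<sigma> \<le> \<bar>l \<bullet> f s\<bar> then \<sigma>\<^sup>2 / 4 else 0)"
      by (simp add: sum_distrib_left if_distrib cong: if_cong)
    also have "\<dots> \<le> (1 / real m) * (\<Sum>s\<in>{1..m}. (f s \<bullet> u)\<^sup>2)"
      using each by (intro mult_left_mono sum_mono) auto
    finally show ?thesis .
  qed
  fix v :: "real^'n"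
  show "(\<sigma> * p / 4)\<^sup>2 * (v \<bullet> v) \<le> v \<bullet> (((1 / real m) *\<^sub>R (\<Sum>s = 1..m. outer (f s))) *v v)"
  proof (cases "v = 0")
    case True then show ?thesis by simp
  next
    case False
    define u where "u = (1 / norm v) *\<^sub>R v"
    have nu: "norm u = 1" using False by (simp add: u_def)
    have vu: "v = norm v *\<^sub>R u" using False by (simp add: u_def)
    have eq1: "(\<Sum>s\<in>{1..m}. (f s \<bullet> v)\<^sup>2) = (norm v)\<^sup>2 * (\<Sum>s\<in>{1..m}. (f s \<bullet> u)\<^sup>2)"
      by (subst vu) (simp add: sum_distrib_left power_mult_distrib mult_ac)
    have eq2: "v \<bullet> v = (norm v)\<^sup>2" by (simp add: power2_norm_eq_inner)
    have "(\<sigma> * p / 4)\<^sup>2 * (v \<bullet> v) = (\<sigma> * p / 4)\<^sup>2 * (norm v)\<^sup>2" by (simp add: eq2)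
    also have "\<dots> \<le> ((1 / real m) * (\<Sum>s\<in>{1..m}. (f s \<bullet> u)\<^sup>2)) * (norm v)\<^sup>2"
      by (rule mult_right_mono[OF unit[OF nu]]) simp
    also have "\<dots> = (1 / real m) * (\<Sum>s\<in>{1..m}. (f s \<bullet> v)\<^sup>2)" unfolding eq1 by (simp add: mult_ac)
    also have "\<dots> = v \<bullet> (((1 / real m) *\<^sub>R (\<Sum>s = 1..m. outer (f s))) *v v)"
      by (rule quad_form[symmetric]) simp
    finally show ?thesis .
  qed
qed

lemma grid:
  fixes v :: "real^'n"
  assumes v1: "norm v \<le> 1" and h0: "h > 0"
  shows "\<exists>j \<in> Pi\<^sub>E UNIV (\<lambda>_. {-\<lceil>1/h\<rceil>..\<lceil>1/h\<rceil>}). norm (v - (\<chi> i. h * of_int (j i))) \<le> h * sqrt (real CARD('n)) / 2"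
proof
  define j where "j = (\<lambda>i. round (v $ i / h))"
  have r: "\<bar>of_int (j i) - v $ i / h\<bar> \<le> 1/2" for i unfolding j_def by (rule of_int_round_abs_le)
  have vi: "\<bar>v $ i\<bar> \<le> 1" for i using component_le_norm_cart[of v i] v1 by linarith
  have vih: "\<bar>v $ i / h\<bar> \<le> 1 / h" for i using vi[of i] h0 by (simp add: abs_div divide_right_mono)
  show "j \<in> Pi\<^sub>E UNIV (\<lambda>_. {-\<lceil>1/h\<rceil>..\<lceil>1/h\<rceil>})"
  proof (simp add: PiE_iff, intro allI conjI)
    fix i
    have a: "real_of_int (j i) \<le> v $ i / h + 1/2" "v $ i / h - 1/2 \<le> real_of_int (j i)"
      using r[of i, unfolded abs_le_iff] by linarith+
    have b: "v $ i / h \<le> 1/h" "- (1/h) \<le> v $ i / h"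
      using vih[of i, unfolded abs_le_iff] by linarith+
    have c: "1/h \<le> real_of_int \<lceil>1/h\<rceil>" by (rule le_of_int_ceiling)
    have "real_of_int (j i) < real_of_int \<lceil>1/h\<rceil> + 1" using a b c by linarith
    then have "j i < \<lceil>1/h\<rceil> + 1" by (metis of_int_1 of_int_add of_int_less_iff)
    then show "j i \<le> \<lceil>1/h\<rceil>" by linarith
    have "- real_of_int \<lceil>1/h\<rceil> - 1 < real_of_int (j i)" using a b c by linarith
    then have "- \<lceil>1/h\<rceil> - 1 < j i" by (metis of_int_1 of_int_diff of_int_minus of_int_less_iff)
    then show "- \<lceil>1/h\<rceil> \<le> j i" by linarith
  qed
  have comp: "(v $ i - h * of_int (j i))\<^sup>2 \<le> (h / 2)\<^sup>2" for i
  proof -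
    have "v $ i - h * of_int (j i) = - h * (of_int (j i) - v $ i / h)" using h0 by (simp add: field_simps)
    then have "\<bar>v $ i - h * of_int (j i)\<bar> = h * \<bar>of_int (j i) - v $ i / h\<bar>" using h0 by (simp add: abs_mult)
    also have "\<dots> \<le> h / 2" using r[of i] h0 by (simp add: mult_left_le)
    finally have aa: "\<bar>v $ i - h * of_int (j i)\<bar> \<le> h / 2" .
    show ?thesis using power_mono[OF aa abs_ge_zero, of 2] by simp
  qed
  have nsq: "(norm x)\<^sup>2 = (\<Sum>i\<in>UNIV. (x $ i)\<^sup>2)" for x :: "real^'n"
    by (simp add: norm_vec_def L2_set_def sum_nonneg)
  have "(norm (v - (\<chi> i. h * of_int (j i))))\<^sup>2 \<le> (\<Sum>i\<in>(UNIV::'n set). (h / 2)\<^sup>2)"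
    unfolding nsq using sum_mono[of "UNIV::'n set" "\<lambda>i. (v $ i - h * of_int (j i))\<^sup>2" "\<lambda>_. (h / 2)\<^sup>2"] comp
    by simp
  also have "\<dots> = (h * sqrt (real CARD('n)) / 2)\<^sup>2" by (simp add: power_mult_distrib power_divide)
  finally have sq: "(norm (v - (\<chi> i. h * of_int (j i))))\<^sup>2 \<le> (h * sqrt (real CARD('n)) / 2)\<^sup>2" .
  have h2: "0 \<le> h * sqrt (real CARD('n)) / 2" using h0 by simp
  show "norm (v - (\<chi> i. h * of_int (j i))) \<le> h * sqrt (real CARD('n)) / 2"
    by (rule power2_le_imp_le[OF sq h2])
qed

theorem lemma1:
  fixes M :: "'a measure"
    and A :: "real^'nx^'nx" and B :: "real^'nu^'nx"
    and x :: "nat \<Rightarrow> 'a \<Rightarrow> real^'nx" and u :: "nat \<Rightarrow> 'a \<Rightarrow> real^'nu"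
    and w :: "nat \<Rightarrow> 'a \<Rightarrow> real^'nx"
    and z :: "nat \<Rightarrow> 'a \<Rightarrow> real^('nx + 'nu)"
    and \<sigma>z pz bz wmax :: real and m T :: nat
  assumes M: "prob_space M"
    and x_meas: "\<And>t. x t \<in> borel_measurable M"
    and u_meas: "\<And>t. u t \<in> borel_measurable M"
    and w_meas: "\<And>t. w t \<in> borel_measurable M"
    and z_def: "\<And>t \<omega>. z t \<omega> = stack (x t \<omega>) (u t \<omega>)"
    and dyn: "\<And>t \<omega>. \<omega> \<in> space M \<Longrightarrow> x (Suc t) \<omega> = A *v x t \<omega> + B *v u t \<omega> + w t \<omega>"
    and w_bdd: "\<And>t. AE \<omega> in M. infnorm (w t \<omega>) \<le> wmax"
    and w_indep: "prob_space.indep_vars M (\<lambda>_. borel) w UNIV"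
    and w_ident: "\<And>t. distr M borel (w t) = distr M borel (w 0)"
    and w_mean: "\<And>t. prob_space.expectation M (w t) = 0"
    and w_cov: "\<And>t. pos_def (\<chi> i j. prob_space.expectation M (\<lambda>\<omega>. w t \<omega> $ i * w t \<omega> $ j))"
    and \<sigma>z_pos: "\<sigma>z > 0" and pz: "0 < pz" "pz \<le> 1" and bz: "bz \<ge> 0"
    and A2_excite: "\<And>l t. norm (l :: real^('nx + 'nu)) = 1 \<Longrightarrow>
        AE \<omega> in M. real_cond_exp M (filt M w z t)
          (indicator {\<omega>' \<in> space M. \<bar>l \<bullet> z (Suc t) \<omega>'\<bar> \<ge> \<sigma>z}) \<omega> \<ge> pz"
    and A2_bdd: "\<And>t. AE \<omega> in M. norm (z t \<omega>) \<le> bz"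
    and m: "m \<ge> 1" and T: "T > m"
  shows "measure M (space M - {\<omega> \<in> space M. \<forall>k \<le> nat \<lceil>real T / real m\<rceil> - 1.
            loewner_ge ((1 / real m) *\<^sub>R (\<Sum>s = 1..m. outer (z (k * m + s) \<omega>)))
                       ((const_a1 \<sigma>z pz)^2 *\<^sub>R mat 1)})
         \<le> 544 * (real T / real m) * real CARD('nx + 'nu) powr 2.5
             * ln (const_a2 \<sigma>z pz bz * real CARD('nx + 'nu))
             * (const_a2 \<sigma>z pz bz) ^ CARD('nx + 'nu) * exp (- const_a3 pz * real m)"
proof -
  interpret prob_space M by (rule M)
  define n where "n = CARD('nx + 'nu)"
  have "0 < CARD('nx)" by (simp add: card_gt_0_iff)
  then have c1: "1 \<le> real CARD('nx)" by simp
  have c2: "0 \<le> real CARD('nu)" by simp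
  have "real n = real CARD('nx) + real CARD('nu)" unfolding n_def by simp
  then have n1: "real n \<ge> 1" using c1 c2 by linarith
  have zeq: "z t = (\<lambda>\<omega>. stack (x t \<omega>) (u t \<omega>))" for t by (rule ext) (simp add: z_def)
  have zm[measurable]: "z t \<in> borel_measurable M" for t
    unfolding zeq by (intro stack_measurable x_meas u_meas)
  interpret Bk: blk M z w \<sigma>z pz
    by unfold_locales (auto intro: M zm w_meas A2_excite)
  have p0: "0 \<le> pz" using pz by simp
  have cov: "real n * \<sigma>z\<^sup>2 * pz \<le> bz\<^sup>2"
    unfolding n_def by (rule Bk.coverage[OF \<sigma>z_pos A2_bdd[of "Suc 0"]])
  have bz0: "bz > 0"
  proof -
    have "0 < real n * \<sigma>z\<^sup>2 * pz" using n1 \<sigma>z_pos pz by simp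
    then have "0 < bz\<^sup>2" using cov by linarith
    then show ?thesis using bz by (cases "bz = 0") auto
  qed
  define \<epsilon> where "\<epsilon> = \<sigma>z / (2 * bz)"
  have \<epsilon>0: "\<epsilon> > 0" unfolding \<epsilon>_def using \<sigma>z_pos bz0 by simp
  define h where "h = \<epsilon> / sqrt (real n)"
  have h0: "h > 0" unfolding h_def using \<epsilon>0 n1 by simp
  have hn: "h * sqrt (real n) = \<epsilon>" unfolding h_def using n1 by simp
  define J where "J = \<lceil>1/h\<rceil>"
  define I where "I = Pi\<^sub>E (UNIV :: ('nx + 'nu) set) (\<lambda>_. {-J..J})"
  define g where "g = (\<lambda>j :: ('nx + 'nu) \<Rightarrow> int. (\<chi> i. h * of_int (j i)) :: real^('nx + 'nu))"
  define I' where "I' = {j \<in> I. \<exists>l. norm l = 1 \<and> norm (l - g j) \<le> \<epsilon> / 2}"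
  define lam where "lam = (\<lambda>j. SOME l. norm l = 1 \<and> norm (l - g j) \<le> \<epsilon> / 2)"
  have lam: "norm (lam j) = 1 \<and> norm (lam j - g j) \<le> \<epsilon> / 2" if "j \<in> I'" for j
  proof -
    from that obtain l where "norm l = 1 \<and> norm (l - g j) \<le> \<epsilon> / 2" unfolding I'_def by blast
    then show ?thesis unfolding lam_def by (rule someI[where P="\<lambda>l. norm l = 1 \<and> norm (l - g j) \<le> \<epsilon> / 2"])
  qed
  have finI: "finite I" unfolding I_def by (intro finite_PiE) auto
  have finI': "finite I'" using finI unfolding I'_def by simp
  have net: "\<exists>j\<in>I'. norm (v - lam j) \<le> \<epsilon>" if v: "norm v = 1" for v
  proof -
    obtain j where j: "j \<in> I" "norm (v - g j) \<le> h * sqrt (real n) / 2"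
      using grid[of v h] v h0 unfolding I_def g_def J_def n_def by auto
    have j2: "norm (v - g j) \<le> \<epsilon> / 2" using j(2) hn by simp
    have jI': "j \<in> I'" unfolding I'_def using j(1) j2 v by (auto simp: norm_minus_commute)
    have "norm (v - lam j) \<le> norm (v - g j) + norm (lam j - g j)"
      using norm_triangle_ineq4[of "v - g j" "lam j - g j"] by simp
    also have "\<dots> \<le> \<epsilon>" using j2 lam[OF jI'] by simp
    finally show ?thesis using jI' by blast
  qed
  define K where "K = nat \<lceil>real T / real m\<rceil> - 1"
  define Bad where "Bad = (\<lambda>(k, j). {\<omega>\<in>space M. (\<Sum>s<m. Bk.Yi (lam j) (k * m + s) \<omega>) < pz * real m / 4})"
  have Bad_sets: "Bad kj \<in> sets M" for kj
    unfolding Bad_def by (cases kj) (simp, measurable)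
  have Bad_meas: "measure M (Bad (k, j)) \<le> exp (- pz * real m / 8)" if "j \<in> I'" for k j
    unfolding Bad_def using Bk.bad_bound[OF conjunct1[OF lam[OF that]] p0 pz(2), of "k * m" m] by simp
  have "AE \<omega> in M. \<forall>t. norm (z t \<omega>) \<le> bz" using A2_bdd by (simp add: AE_all_countable)
  then obtain N where N: "{\<omega>\<in>space M. \<not> (\<forall>t. norm (z t \<omega>) \<le> bz)} \<subseteq> N" "emeasure M N = 0" "N \<in> sets M"
    by (rule AE_E)
  define Good where "Good = {\<omega> \<in> space M. \<forall>k \<le> nat \<lceil>real T / real m\<rceil> - 1.
            loewner_ge ((1 / real m) *\<^sub>R (\<Sum>s = 1..m. outer (z (k * m + s) \<omega>)))
                       ((const_a1 \<sigma>z pz)^2 *\<^sub>R mat 1)}"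
  have incl: "space M - Good \<subseteq> N \<union> (\<Union>kj\<in>{..K} \<times> I'. Bad kj)"
  proof
    fix \<omega> assume \<omega>: "\<omega> \<in> space M - Good"
    show "\<omega> \<in> N \<union> (\<Union>kj\<in>{..K} \<times> I'. Bad kj)"
    proof (rule ccontr)
      assume nin: "\<omega> \<notin> N \<union> (\<Union>kj\<in>{..K} \<times> I'. Bad kj)"
      then have zb: "norm (z t \<omega>) \<le> bz" for t using N(1) \<omega> by auto
      have "loewner_ge ((1 / real m) *\<^sub>R (\<Sum>s = 1..m. outer (z (k * m + s) \<omega>)))
                       ((const_a1 \<sigma>z pz)^2 *\<^sub>R mat 1)" if k: "k \<le> K" for k
        unfolding const_a1_def
      proof (rule det_block[OF m _ \<sigma>z_pos bz0 p0 pz(2)])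
        show "norm (z (k * m + s) \<omega>) \<le> bz" for s by (rule zb)
        fix v :: "real^('nx + 'nu)" assume v: "norm v = 1"
        obtain j where j: "j \<in> I'" "norm (v - lam j) \<le> \<epsilon>" using net[OF v] by blast
        have "\<omega> \<notin> Bad (k, j)" using nin k j(1) by blast
        then have cnt: "pz * real m / 4 \<le> (\<Sum>s<m. Bk.Yi (lam j) (k * m + s) \<omega>)"
          using \<omega> unfolding Bad_def by auto
        have "(\<Sum>s<m. Bk.Yi (lam j) (k * m + s) \<omega>) =
              (\<Sum>s\<in>{1..m}. if \<sigma>z \<le> \<bar>lam j \<bullet> z (k * m + s) \<omega>\<bar> then 1 else 0)"
        proof -
          have "(\<Sum>s<m. Bk.Yi (lam j) (k * m + s) \<omega>) =
              (\<Sum>s<m. if \<sigma>z \<le> \<bar>lam j \<bullet> z (k * m + Suc s) \<omega>\<bar> then 1 else 0)"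
            by (rule sum.cong) (use \<omega> in \<open>auto simp: Bk.Yi_def indicator_def\<close>)
          also have "\<dots> = (\<Sum>s\<in>{1..m}. if \<sigma>z \<le> \<bar>lam j \<bullet> z (k * m + s) \<omega>\<bar> then 1 else 0)"
            by (simp only: One_nat_def sum.atLeast1_atMost_eq)
          finally show ?thesis .
        qed
        then show "\<exists>l. norm l = 1 \<and> norm (v - l) \<le> \<sigma>z / (2 * bz) \<and>
                 pz * real m / 4 \<le> (\<Sum>s\<in>{1..m}. if \<sigma>z \<le> \<bar>l \<bullet> z (k * m + s) \<omega>\<bar> then 1 else 0)"
          using cnt lam[OF j(1)] j(2) unfolding \<epsilon>_def by auto
      qed
      then have "\<omega> \<in> Good" using \<omega> unfolding Good_def K_def by auto
      then show False using \<omega> by blast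
    qed
  qed
  have U_sets: "(\<Union>kj\<in>{..K} \<times> I'. Bad kj) \<in> sets M"
    using Bad_sets by (intro sets.finite_UN) (auto simp: finI')
  have "measure M (space M - Good) \<le> measure M (N \<union> (\<Union>kj\<in>{..K} \<times> I'. Bad kj))"
    using incl N(3) U_sets by (intro finite_measure_mono) auto
  also have "\<dots> \<le> measure M N + measure M (\<Union>kj\<in>{..K} \<times> I'. Bad kj)"
    using N(3) U_sets by (rule measure_Un_le)
  also have "measure M N = 0" using N(2) by (simp add: measure_def)
  also have "measure M (\<Union>kj\<in>{..K} \<times> I'. Bad kj) \<le> (\<Sum>kj\<in>{..K} \<times> I'. measure M (Bad kj))"
    using Bad_sets finI' by (intro measure_subadditive_finite) auto
  also have "\<dots> \<le> real (card ({..K} \<times> I')) * exp (- pz * real m / 8)"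
    using Bad_meas by (intro sum_bounded_above) auto
  finally have main: "measure M (space M - Good) \<le> real (card ({..K} \<times> I')) * exp (- pz * real m / 8)"
    by simp
  define \<rho> where "\<rho> = bz / \<sigma>z"
  have \<rho>0: "\<rho> > 0" unfolding \<rho>_def using bz0 \<sigma>z_pos by simp
  have np: "real n * pz \<le> \<rho>\<^sup>2"
  proof -
    have "real n * pz * \<sigma>z\<^sup>2 \<le> bz\<^sup>2" using cov by (simp add: mult_ac)
    then show ?thesis unfolding \<rho>_def using \<sigma>z_pos by (simp add: power_divide field_simps)
  qed
  define a2 where "a2 = const_a2 \<sigma>z pz bz"
  have a2eq: "a2 = 64 * \<rho>\<^sup>2 / pz\<^sup>2" unfolding a2_def const_a2_def \<rho>_def using \<sigma>z_pos
    by (simp add: power_divide field_simps)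
  have p2: "pz\<^sup>2 \<le> pz" using pz by (simp add: power2_eq_square mult_le_one mult_left_le)
  have rp: "pz\<^sup>2 \<le> \<rho>\<^sup>2"
  proof -
    have "1 * pz \<le> real n * pz" using n1 p0 by (intro mult_right_mono) auto
    then show ?thesis using np p2 by linarith
  qed
  have a2_64: "64 \<le> a2" unfolding a2eq using rp pz by (simp add: field_simps)
  have sqn: "sqrt (real n) \<le> \<rho> / pz\<^sup>2"
  proof -
    have "pz ^ 3 \<le> 1" using pz by (simp add: power_le_one)
    then have "pz * pz ^ 3 \<le> pz * 1" using p0 by (intro mult_left_mono) auto
    moreover have "pz ^ 4 = pz * pz ^ 3" by (simp add: eval_nat_numeral)
    ultimately have p4: "pz ^ 4 \<le> pz" by simp
    have "real n * pz ^ 4 \<le> real n * pz" using p4 n1 by (intro mult_left_mono) auto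
    then have "real n * pz ^ 4 \<le> \<rho>\<^sup>2" using np by linarith
    moreover have "(\<rho> / pz\<^sup>2)\<^sup>2 = \<rho>\<^sup>2 / pz ^ 4" by (simp add: power_divide power_mult[symmetric])
    ultimately have "real n \<le> (\<rho> / pz\<^sup>2)\<^sup>2" using pz by (simp add: pos_le_divide_eq)
    then have "sqrt (real n) \<le> sqrt ((\<rho> / pz\<^sup>2)\<^sup>2)" by (rule real_sqrt_le_mono)
    also have "\<dots> = \<rho> / pz\<^sup>2" using \<rho>0 pz by simp
    finally show ?thesis .
  qed
  have cardI: "card I = (nat (2 * J + 1)) ^ n"
    unfolding I_def n_def by (simp add: card_PiE)
  have J1: "J \<ge> 1" unfolding J_def using h0 by simp
  have Jb: "real_of_int (2 * J + 1) \<le> a2"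
  proof -
    have "real_of_int J < 1/h + 1" unfolding J_def by linarith
    moreover have "1/h = 2 * \<rho> * sqrt (real n)" unfolding h_def \<epsilon>_def \<rho>_def using \<sigma>z_pos bz0
      by (simp add: field_simps)
    ultimately have "real_of_int (2 * J + 1) \<le> 4 * \<rho> * sqrt (real n) + 3" by simp
    also have "\<dots> \<le> 4 * \<rho> * (\<rho> / pz\<^sup>2) + 3 * (\<rho>\<^sup>2 / pz\<^sup>2)"
    proof -
      have "1 \<le> \<rho>\<^sup>2 / pz\<^sup>2" using rp pz by simp
      then show ?thesis using sqn \<rho>0 by (intro add_mono mult_left_mono) auto
    qed
    also have "\<dots> = 7 * \<rho>\<^sup>2 / pz\<^sup>2" by (simp add: power2_eq_square field_simps)
    also have "\<dots> \<le> a2" unfolding a2eq using pz by (simp add: field_simps)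
    finally show ?thesis .
  qed
  have cardI'_le: "real (card I') \<le> a2 ^ n"
  proof -
    have "card I' \<le> card I" unfolding I'_def using finI by (intro card_mono) auto
    then have "real (card I') \<le> real (nat (2 * J + 1)) ^ n" using cardI by simp
    also have "\<dots> \<le> a2 ^ n" using Jb J1 by (intro power_mono) auto
    finally show ?thesis .
  qed
  have Tm: "real T / real m > 1" using T m by (simp add: field_simps)
  have K1: "real (K + 1) \<le> 2 * (real T / real m)"
  proof -
    have "\<lceil>real T / real m\<rceil> \<ge> 1" using Tm by linarith
    then have "K + 1 = nat \<lceil>real T / real m\<rceil>" unfolding K_def by linarith
    then have "real (K + 1) = of_int \<lceil>real T / real m\<rceil>" using \<open>\<lceil>real T / real m\<rceil> \<ge> 1\<close> by simp
    also have "\<dots> \<le> real T / real m + 1" by linarith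
    finally show ?thesis using Tm by linarith
  qed
  have ln1: "1 \<le> ln (a2 * real n)"
  proof -
    have "a2 * 1 \<le> a2 * real n" using a2_64 n1 by (intro mult_left_mono) auto
    then have "exp 1 \<le> a2 * real n" using exp_le a2_64 by linarith
    then show ?thesis using a2_64 n1 by (subst ln_ge_iff) auto
  qed
  have npow: "1 \<le> real n powr 2.5" using n1 by (intro ge_one_powr_ge_zero) auto
  have ex: "exp (- pz * real m / 8) \<le> exp (- const_a3 pz * real m)"
    unfolding const_a3_def using p2 by (simp add: mult_right_mono)
  have "measure M (space M - Good) \<le> real (card ({..K} \<times> I')) * exp (- pz * real m / 8)" by (rule main)
  also have "\<dots> = real (K + 1) * real (card I') * exp (- pz * real m / 8)" by (simp add: card_cartesian_product algebra_simps)
  also have "\<dots> \<le> (2 * (real T / real m)) * a2 ^ n * exp (- const_a3 pz * real m)"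
    using K1 cardI'_le ex by (intro mult_mono) auto
  also have "\<dots> \<le> 544 * (real T / real m) * real n powr 2.5 * ln (a2 * real n) * a2 ^ n * exp (- const_a3 pz * real m)"
  proof -
    have "2 \<le> 544 * (real n powr 2.5 * ln (a2 * real n))"
      using mult_mono[OF npow ln1] by (simp add: mult.commute)
    then have "2 * (real T / real m) \<le> (544 * (real n powr 2.5 * ln (a2 * real n))) * (real T / real m)"
      using Tm by (intro mult_right_mono) auto
    then have "2 * (real T / real m) \<le> 544 * (real T / real m) * real n powr 2.5 * ln (a2 * real n)"
      by (simp only: mult_ac)
    then show ?thesis using a2_64 by (intro mult_right_mono) auto
  qed
  finally show ?thesis unfolding Good_def a2_def n_def .
qed

end
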